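(* Let $G>0$, $T>0$, and let $F\colon\mathbb R\to\mathbb R^2$ be $T$-periodic and of class $C^1$. There exists $a_0\in(0,1)$ such that for every $a$ with $a_0\le a<1$, the function $m_a(t,x,p)=\tfrac12|x|^2-\tfrac12a^2$ is a curvature bound function for $v_\lambda$ for all $\lambda\in[0,1]$.
   Context: Let $\Omega=\{(x,p)\in\mathbb R^2\times\mathbb R^2:|x|<1\}$. For $\lambda\in[0,1]$, $v_\lambda\colon\mathbb R\times\Omega\to\mathbb R\times\mathbb R^2\times\mathbb R^2$ is \[ v_\lambda(t,x,p)=\Big(1,\ p,\ \Big(G\sqrt{1-|x|^2}-\tfrac{(x^Tp)^2}{1-|x|^2}-|p|^2\Big)x+\lambda\big((x^TF(t))x-F(t)\big)\Big), \] the right-hand side of $\dot t=1$, $\dot x=p$, $\dot p=\dots$. A $C^2$ function $e$ on an open subset $W$ of $\mathbb R\times\Omega$ is a curvature bound function for $v$ if for every $z\in W$ with $e(z)=0$: $De(z)v(z)=0$ implies $v(z)^TD^2e(z)v(z)+De(z)Dv(z)v(z)>0$, where $De$ is the derivative (row vector) with respect to all variables $(t,x,p)$, $D^2e$ the Hessian and $Dv$ the Jacobian matrix. Here $m_a$ is considered on all of $\mathbb R\times\Omega$. *)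

theory Defs
  imports "HOL-Analysis.Analysis"
begin

type_synonym state = "real \<times> (real^2) \<times> (real^2)"

definition curvature_bound_function ::
  "'a::euclidean_space set \<Rightarrow> ('a \<Rightarrow> real) \<Rightarrow> ('a \<Rightarrow> 'a) \<Rightarrow> bool" where
  "curvature_bound_function W e v \<longleftrightarrow> open W \<and>
     (\<exists>D1 D2 Dv.
        (\<forall>z\<in>W. (e has_derivative blinfun_apply (D1 z)) (at z)) \<and>
        (\<forall>z\<in>W. (D1 has_derivative blinfun_apply (D2 z)) (at z)) \<and>
        continuous_on W D2 \<and>
        (\<forall>z\<in>W. (v has_derivative Dv z) (at z)) \<and>
        (\<forall>z\<in>W. e z = 0 \<longrightarrow> D1 z (v z) = 0 \<longrightarrow>
            D2 z (v z) (v z) + D1 z (Dv z (v z)) > 0))"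

definition Omega :: "state set" where
  "Omega = {(t, x, p). norm x < 1}"

definition vfield :: "real \<Rightarrow> (real \<Rightarrow> real^2) \<Rightarrow> real \<Rightarrow> state \<Rightarrow> state" where
  "vfield G F l z = (case z of (t, x, p) \<Rightarrow>
     (1, p, (G * sqrt (1 - (norm x)\<^sup>2) - (x \<bullet> p)\<^sup>2 / (1 - (norm x)\<^sup>2) - (norm p)\<^sup>2) *\<^sub>R x
            + l *\<^sub>R ((x \<bullet> F t) *\<^sub>R x - F t)))"

definition m_fun :: "real \<Rightarrow> state \<Rightarrow> real" where
  "m_fun a z = (case z of (t, x, p) \<Rightarrow> (norm x)\<^sup>2 / 2 - a\<^sup>2 / 2)"

end

theory Submission
  imports Defs
begin

lemma vdiff:
  fixes F :: "real \<Rightarrow> real^2"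
  assumes F: "\<forall>t. (F has_vector_derivative F' t)(at t)" and z: "z \<in> Omega"
  shows "vfield G F l differentiable (at z)"
proof -
  obtain t x p where zz: "z = (t,x,p)" by (cases z) auto
  have nx: "norm x < 1" using z zz by (simp add: Omega_def)
  have e: "vfield G F l = (\<lambda>z. (1, snd (snd z), (G * sqrt (1 - (norm (fst (snd z)))\<^sup>2) - (fst (snd z) \<bullet> snd (snd z))\<^sup>2 / (1 - (norm (fst (snd z)))\<^sup>2) - (norm (snd (snd z)))\<^sup>2) *\<^sub>R fst (snd z)
            + l *\<^sub>R ((fst (snd z) \<bullet> F (fst z)) *\<^sub>R fst (snd z) - F (fst z))))"
    by (auto simp: vfield_def fun_eq_iff split: prod.splits)
  have d1: "(\<lambda>z. fst (snd z)) differentiable (at w)" for w :: state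
    by (intro bounded_linear_imp_differentiable bounded_linear_compose[OF bounded_linear_fst bounded_linear_snd])
  have d2: "(\<lambda>z. snd (snd z)) differentiable (at w)" for w :: state
    by (intro bounded_linear_imp_differentiable bounded_linear_compose[OF bounded_linear_snd bounded_linear_snd])
  have d0: "(\<lambda>z. fst z) differentiable (at w)" for w :: state
    by (intro bounded_linear_imp_differentiable bounded_linear_fst)
  have dF: "(\<lambda>z. F (fst z)) differentiable (at w)" for w :: state
    using F differentiable_compose[OF _ d0] unfolding differentiable_def has_vector_derivative_def by blast
  have dn: "(\<lambda>z. (norm (fst (snd z)))\<^sup>2) differentiable (at w)" for w :: state
    using d1 by (simp add: power2_norm_eq_inner)
  have dsq: "(\<lambda>z. sqrt (1 - (norm (fst (snd z)))\<^sup>2)) differentiable (at z)"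
  proof -
    have "(norm x)\<^sup>2 < 1\<^sup>2" by (rule power_strict_mono) (use nx in auto)
    hence "0 < 1 - (norm x)\<^sup>2" by simp
    moreover obtain D where D: "((\<lambda>z. 1 - (norm (fst (snd z)))\<^sup>2) has_derivative D) (at z)"
      using differentiable_diff[OF differentiable_const dn[of z]] unfolding differentiable_def by blast
    ultimately show ?thesis unfolding differentiable_def using has_derivative_real_sqrt[OF _ D] zz by auto
  qed
  have dq: "(\<lambda>z. 1 - (norm (fst (snd z)))\<^sup>2) differentiable (at z)" using dn by simp
  have "(norm x)\<^sup>2 < 1\<^sup>2" by (rule power_strict_mono) (use nx in auto)
  hence nz: "1 - (norm (fst (snd z)))\<^sup>2 \<noteq> 0" using zz by simp
  have dP: "(\<lambda>z. (fst (snd z) \<bullet> snd (snd z))\<^sup>2) differentiable (at z)"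
    using differentiable_power[OF differentiable_inner[OF d1 d2]] by simp
  have dN: "(\<lambda>z. (norm (snd (snd z)))\<^sup>2) differentiable (at z)"
    using d2 by (simp add: power2_norm_eq_inner)
  have dI: "(\<lambda>z. fst (snd z) \<bullet> F (fst z)) differentiable (at z)"
    using differentiable_inner[OF d1 dF] by simp
  show ?thesis unfolding e
    apply (rule differentiable_Pair[OF differentiable_const differentiable_Pair[OF d2]])
    apply (rule differentiable_add)
    apply (rule differentiable_scaleR[OF _ d1])
    apply (rule differentiable_diff[OF differentiable_diff])
    apply (rule differentiable_mult[OF differentiable_const dsq])
    apply (rule differentiable_divide[OF dP dq nz])
    apply (rule dN)
    apply (rule differentiable_scaleR[OF differentiable_const])
    apply (rule differentiable_diff[OF differentiable_scaleR[OF dI d1] dF])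
    done
qed

definition gg :: "state \<Rightarrow> state \<Rightarrow> real" where "gg z w = fst (snd z) \<bullet> fst (snd w)"
lemma bb: "bounded_bilinear gg"
  unfolding gg_def
  by (rule bounded_bilinear.comp[OF bounded_bilinear_inner]) (intro bounded_linear_compose[OF bounded_linear_fst bounded_linear_snd])+
lemma key:
  fixes x p Fv :: "real^2"
  assumes "norm x = a" "0 < a" "a < 1" "x \<bullet> p = 0" "0 \<le> l" "l \<le> 1" "norm Fv \<le> M"
    "sqrt (1 - a\<^sup>2) * M < G * a\<^sup>2"
  shows "(norm p)\<^sup>2 + x \<bullet> ((G * sqrt (1 - (norm x)\<^sup>2) - (x \<bullet> p)\<^sup>2 / (1 - (norm x)\<^sup>2) - (norm p)\<^sup>2) *\<^sub>R x
            + l *\<^sub>R ((x \<bullet> Fv) *\<^sub>R x - Fv)) > 0"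
proof -
  define s where "s = sqrt (1 - a\<^sup>2)"
  have a2: "a\<^sup>2 < 1" using assms by (simp add: power_less_one_iff)
  have s2: "s\<^sup>2 = 1 - a\<^sup>2" using a2 by (simp add: s_def)
  have a2e: "a\<^sup>2 = 1 - s\<^sup>2" using s2 by simp
  have sp: "s > 0" using a2 by (simp add: s_def)
  have xx: "x \<bullet> x = a\<^sup>2" using assms(1) power2_norm_eq_inner[of x] by simp
  have cs: "\<bar>x \<bullet> Fv\<bar> \<le> M"
  proof -
    have "\<bar>x \<bullet> Fv\<bar> \<le> norm x * norm Fv" by (rule Cauchy_Schwarz_ineq2)
    also have "\<dots> \<le> 1 * M" using assms by (intro mult_mono) auto
    finally show ?thesis by simp
  qed
  have M0: "0 \<le> M" using cs by linarith
  have h1: "l * (x \<bullet> Fv) \<le> l * M" using mult_left_mono[OF abs_le_D1[OF cs] assms(5)] .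
  have h2: "l * M \<le> M" using mult_left_le_one_le[OF M0 assms(5,6)] .
  have "s * (l * (x \<bullet> Fv)) \<le> s * M" using mult_left_mono[of "l * (x \<bullet> Fv)" M s] h1 h2 sp by simp
  hence h3: "l * s * (x \<bullet> Fv) \<le> s * M" by (simp add: mult_ac)
  have h4: "0 \<le> (norm p)\<^sup>2 * s" using sp by simp
  have inner: "(norm p)\<^sup>2 * s + G * a\<^sup>2 - l * s * (x \<bullet> Fv) > 0"
    using assms(8) h3 h4 unfolding s_def[symmetric] by linarith
  have "(norm p)\<^sup>2 + x \<bullet> ((G * sqrt (1 - (norm x)\<^sup>2) - (x \<bullet> p)\<^sup>2 / (1 - (norm x)\<^sup>2) - (norm p)\<^sup>2) *\<^sub>R x
            + l *\<^sub>R ((x \<bullet> Fv) *\<^sub>R x - Fv))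
     = (norm p)\<^sup>2 + (G * s - (norm p)\<^sup>2) * a\<^sup>2 + l * ((x \<bullet> Fv) * a\<^sup>2 - x \<bullet> Fv)"
    using assms(1,4) xx by (simp add: s_def inner_add_right inner_diff_right algebra_simps)
  also have "\<dots> = s * ((norm p)\<^sup>2 * s + G * a\<^sup>2 - l * s * (x \<bullet> Fv))"
    unfolding a2e by (simp add: algebra_simps power2_eq_square)
  also have "\<dots> > 0" using sp inner by simp
  finally show ?thesis .
qed

lemma periodic_bound:
  fixes F :: "real \<Rightarrow> real^2"
  assumes T: "T > 0" and per: "\<forall>t. F (t + T) = F t" and c: "continuous_on UNIV F"
  shows "\<exists>M. \<forall>t. norm (F t) \<le> M"
proof -
  have "compact (F ` {0..T})" by (rule compact_continuous_image) (use c continuous_on_subset in auto)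
  then obtain M where M: "\<forall>y\<in>F ` {0..T}. norm y \<le> M" using compact_imp_bounded bounded_iff by metis
  have pn: "F (t + real n * T) = F t" for t n
    by (induction n) (auto simp: algebra_simps per[rule_format, of "t + real _ * T", simplified algebra_simps])
  show ?thesis
  proof (intro exI allI)
    fix t
    define k where "k = \<lfloor>t / T\<rfloor>"
    define t' where "t' = t - k * T"
    have k1: "k * T \<le> t" using T by (simp add: k_def) (meson floor_divide_lower T)
    have k2: "t < (k + 1) * T" using T by (simp add: k_def) (meson floor_divide_upper T)
    have t'in: "t' \<in> {0..T}" using k1 k2 by (auto simp: t'_def algebra_simps)
    have "F t = F t'"
    proof (cases "k \<ge> 0")
      case True
      have "t = t' + real (nat k) * T" using True by (simp add: t'_def)
      then show ?thesis using pn[of t' "nat k"] by simp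
    next
      case False
      have "t' = t + real (nat (-k)) * T" using False by (simp add: t'_def)
      then show ?thesis using pn[of t "nat (-k)"] by simp
    qed
    then show "norm (F t) \<le> M" using M t'in by auto
  qed
qed

theorem lemma4p1:
  fixes G T :: real and F :: "real \<Rightarrow> real^2"
  assumes "G > 0" and "T > 0"
    and "\<forall>t. F (t + T) = F t"
    and "\<exists>F'. (\<forall>t. (F has_vector_derivative F' t) (at t)) \<and> continuous_on UNIV F'"
  shows "\<exists>a0\<in>{0<..<1}. \<forall>a. a0 \<le> a \<and> a < 1 \<longrightarrow>
           (\<forall>l\<in>{0..1}. curvature_bound_function Omega (m_fun a) (vfield G F l))"
proof -
  obtain F' where F': "\<forall>t. (F has_vector_derivative F' t) (at t)" using assms(4) by blast
  have cF: "continuous_on UNIV F"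
    using F' by (metis continuous_at_imp_continuous_on has_vector_derivative_continuous)
  obtain M where M: "\<forall>t. norm (F t) \<le> M" using periodic_bound[OF assms(2,3) cF] by blast
  have M0: "0 \<le> M" using M norm_ge_zero order_trans by blast
  define d where "d = min (1/2) ((G / (2 * (M + 1)))\<^sup>2)"
  have d0: "0 < d" "d \<le> 1/2" "d \<le> (G / (2 * (M + 1)))\<^sup>2" using assms(1) M0 by (auto simp: d_def)
  define a0 where "a0 = sqrt (1 - d)"
  have a0in: "a0 \<in> {0<..<1}" using d0 by (auto simp: a0_def)
  have good: "sqrt (1 - a\<^sup>2) * M < G * a\<^sup>2" if "a0 \<le> a" "a < 1" for a
  proof -
    have a0p: "0 < a0" using a0in by simp
    have "a0\<^sup>2 \<le> a\<^sup>2" using that a0p by (intro power_mono) auto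
    hence aa: "1 - d \<le> a\<^sup>2" using d0 by (simp add: a0_def)
    have "sqrt (1 - a\<^sup>2) \<le> sqrt ((G / (2 * (M + 1)))\<^sup>2)" using aa d0 by (intro real_sqrt_le_mono) auto
    also have "\<dots> = G / (2 * (M + 1))" using assms(1) M0 by simp
    finally have s1: "sqrt (1 - a\<^sup>2) \<le> G / (2 * (M + 1))" .
    have "sqrt (1 - a\<^sup>2) * M \<le> G / (2 * (M + 1)) * M" using s1 M0 by (rule mult_right_mono)
    also have "\<dots> < G / 2" using assms(1) M0 by (simp add: field_simps)
    also have "\<dots> \<le> G * a\<^sup>2" using aa d0 assms(1) by simp
    finally show ?thesis .
  qed
  have openO: "open Omega"
  proof -
    have "Omega = {z. norm (fst (snd z)) < 1}" by (auto simp: Omega_def)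
    moreover have "open {z :: state. norm (fst (snd z)) < 1}"
      by (intro open_Collect_less continuous_intros)
    ultimately show ?thesis by simp
  qed
  define D1 where "D1 = bounded_bilinear.prod_right gg"
  have D1a: "blinfun_apply (D1 z) w = gg z w" for z w
    unfolding D1_def using bounded_bilinear.prod_right.rep_eq[OF bb] by simp
  have D1bl: "bounded_linear D1" unfolding D1_def by (rule bounded_bilinear.bounded_linear_prod_right[OF bb])
  define D2 where "D2 = (\<lambda>z::state. Blinfun D1)"
  show ?thesis
  proof (rule bexI[OF _ a0in], intro allI impI ballI)
    fix a l :: real
    assume aa: "a0 \<le> a \<and> a < 1" and l: "l \<in> {0..1}"
    have apos: "0 < a" using aa a0in by auto
    define v where "v = vfield G F l"
    define Dv where "Dv = (\<lambda>z. SOME D. (v has_derivative D) (at z))"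
    have Dv: "(v has_derivative Dv z) (at z)" if "z \<in> Omega" for z
      using vdiff[OF F' that, of G l] unfolding Dv_def v_def differentiable_def by (rule someI_ex)
    have e: "(m_fun a has_derivative blinfun_apply (D1 z)) (at z)" for z
    proof -
      have mf: "m_fun a = (\<lambda>z. (1/2) * gg z z - a\<^sup>2 / 2)"
        by (auto simp: m_fun_def gg_def fun_eq_iff power2_norm_eq_inner split: prod.splits)
      have H: "((\<lambda>z. gg z z) has_derivative (\<lambda>h. gg z h + gg h z)) (at z)"
        using bounded_bilinear.FDERIV[OF bb has_derivative_ident has_derivative_ident] by simp
      have "((\<lambda>z. (1/2) * gg z z - a\<^sup>2 / 2) has_derivative (\<lambda>h. (1/2) * (gg z h + gg h z) - 0)) (at z)"
        by (intro has_derivative_diff has_derivative_mult_right H has_derivative_const)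
      moreover have "(\<lambda>h. (1/2) * (gg z h + gg h z) - 0) = blinfun_apply (D1 z)"
        by (auto simp: fun_eq_iff D1a gg_def inner_commute)
      ultimately show ?thesis unfolding mf by simp
    qed
    have d1: "(D1 has_derivative blinfun_apply (D2 z)) (at z)" for z
      unfolding D2_def bounded_linear_Blinfun_apply[OF D1bl] by (rule bounded_linear_imp_has_derivative[OF D1bl])
    show "curvature_bound_function Omega (m_fun a) (vfield G F l)"
      unfolding curvature_bound_function_def v_def[symmetric]
    proof (intro conjI exI[of _ D1] exI[of _ D2] exI[of _ Dv] ballI impI openO e d1 Dv)
      show "continuous_on Omega D2" unfolding D2_def by simp
    next
      fix z assume zO: "z \<in> Omega" and ez: "m_fun a z = 0" and dz: "blinfun_apply (D1 z) (v z) = 0"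
      obtain t x p where zz: "z = (t, x, p)" by (cases z) auto
      have vz: "v (t, x, p) = (1, p, (G * sqrt (1 - (norm x)\<^sup>2) - (x \<bullet> p)\<^sup>2 / (1 - (norm x)\<^sup>2) - (norm p)\<^sup>2) *\<^sub>R x
            + l *\<^sub>R ((x \<bullet> F t) *\<^sub>R x - F t))" by (simp add: v_def vfield_def zz)
      have nx: "norm x = a"
      proof -
        have "(norm x)\<^sup>2 = a\<^sup>2" using ez by (simp add: m_fun_def zz)
        thus ?thesis using apos by (metis norm_ge_zero power2_eq_iff_nonneg less_imp_le)
      qed
      have xp: "x \<bullet> p = 0" using dz by (simp add: D1a gg_def vz zz)
      have comp: "fst (snd (Dv z w)) = snd (snd w)" for w
      proof -
        have "((\<lambda>z. fst (snd (v z))) has_derivative (\<lambda>w. fst (snd (Dv z w)))) (at z)"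
          using Dv[OF zO] by (intro has_derivative_fst has_derivative_snd)
        moreover have "(\<lambda>z. fst (snd (v z))) = (\<lambda>z. snd (snd z))"
          by (auto simp: v_def vfield_def fun_eq_iff split: prod.splits)
        moreover have "((\<lambda>z::state. snd (snd z)) has_derivative (\<lambda>w. snd (snd w))) (at z)"
          by (intro has_derivative_fst has_derivative_snd has_derivative_ident)
        ultimately have "(\<lambda>w. fst (snd (Dv z w))) = (\<lambda>w. snd (snd w))"
          using has_derivative_unique by metis
        thus ?thesis by metis
      qed
      have lhs: "blinfun_apply (blinfun_apply (D2 z) (v z)) (v z) + blinfun_apply (D1 z) (Dv z (v z))
        = (norm p)\<^sup>2 + x \<bullet> ((G * sqrt (1 - (norm x)\<^sup>2) - (x \<bullet> p)\<^sup>2 / (1 - (norm x)\<^sup>2) - (norm p)\<^sup>2) *\<^sub>R x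
            + l *\<^sub>R ((x \<bullet> F t) *\<^sub>R x - F t))"
        unfolding D2_def bounded_linear_Blinfun_apply[OF D1bl] D1a gg_def comp
        by (simp add: vz zz power2_norm_eq_inner)
      show "blinfun_apply (blinfun_apply (D2 z) (v z)) (v z) + blinfun_apply (D1 z) (Dv z (v z)) > 0"
        unfolding lhs
        using key[OF nx apos _ xp _ _ M[rule_format, of t] good] aa l by auto
    qed
  qed
qed

end
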